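(* Let $q$ be a prime power, $u,v\in\mathbb{F}_q^3$ and $\mu\in\mathbb{F}_q$. (1) For every $\lambda\in\mathbb{F}_q^*$, $\widetilde{B}(\lambda u)\cap\widetilde{B}(\mu v)=\lambda\,[\widetilde{B}(u)\cap\widetilde{B}(\lambda^{-1}\mu v)]$. (2) If the family $\{\widetilde{B}(\lambda u):\lambda\in\mathbb{F}_q^*\}$ is a partition of $\widetilde{E}(u)$ and the family $\{\widetilde{B}(\lambda v):\lambda\in\mathbb{F}_q^*\}$ is a partition of $\widetilde{E}(v)$ (i.e. their members are pairwise disjoint with unions $\widetilde{E}(u)$, resp. $\widetilde{E}(v)$), then \[|\widetilde{E}(u)\cap\widetilde{E}(v)|=(q-1)\sum_{\mu\in\mathbb{F}_q^*}|\widetilde{B}(u)\cap\widetilde{B}(\mu v)|.\]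
   Context: $\mathbb{F}_q$ is the finite field with $q$ elements. Hamming distance $d(u,v)=|\{i:u_i\ne v_i\}|$ on $\mathbb{F}_q^3$; $B(u)=\{v:d(u,v)\le1\}$; $E(u)=\bigcup_{\lambda\in\mathbb{F}_q}B(\lambda u)$. $\mathcal{D}_q=\{(u_1,u_2,u_3)\in\mathbb{F}_q^3: u_1,u_2,u_3 \text{ pairwise distinct and nonzero}\}$, $\widetilde{B}(u)=B(u)\cap\mathcal{D}_q$, $\widetilde{E}(u)=E(u)\cap\mathcal{D}_q$. For a set $Z$ and scalar $\lambda$, $\lambda Z=\{\lambda z: z\in Z\}$. *)

theory Defs
  imports Main
begin

type_synonym 'a vec3 = "'a \<times> 'a \<times> 'a"

definition smul :: "'a::field \<Rightarrow> 'a vec3 \<Rightarrow> 'a vec3" where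
  "smul l u = (case u of (a, b, c) \<Rightarrow> (l * a, l * b, l * c))"

definition smul_set :: "'a::field \<Rightarrow> 'a vec3 set \<Rightarrow> 'a vec3 set" where
  "smul_set l Z = smul l ` Z"

definition hdist :: "'a vec3 \<Rightarrow> 'a vec3 \<Rightarrow> nat" where
  "hdist u v = (case u of (u1, u2, u3) \<Rightarrow> case v of (v1, v2, v3) \<Rightarrow>
      (if u1 \<noteq> v1 then 1 else 0) + (if u2 \<noteq> v2 then 1 else 0) + (if u3 \<noteq> v3 then 1 else 0))"

definition ball1 :: "'a vec3 \<Rightarrow> 'a vec3 set" where
  "ball1 u = {v. hdist u v \<le> 1}"

definition Eset :: "'a::field vec3 \<Rightarrow> 'a vec3 set" where
  "Eset u = (\<Union>l\<in>(UNIV::'a set). ball1 (smul l u))"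

definition Dq :: "'a::field vec3 set" where
  "Dq = {(u1, u2, u3). u1 \<noteq> u2 \<and> u1 \<noteq> u3 \<and> u2 \<noteq> u3 \<and> u1 \<noteq> 0 \<and> u2 \<noteq> 0 \<and> u3 \<noteq> 0}"

definition Bt :: "'a::field vec3 \<Rightarrow> 'a vec3 set" where
  "Bt u = ball1 u \<inter> Dq"

definition Et :: "'a::field vec3 \<Rightarrow> 'a vec3 set" where
  "Et u = Eset u \<inter> Dq"

definition is_partition_fam :: "'a::field vec3 \<Rightarrow> bool" where
  "is_partition_fam u =
     ((\<forall>l\<in>-{0}. \<forall>l'\<in>-{0}. l \<noteq> l' \<longrightarrow> Bt (smul l u) \<inter> Bt (smul l' u) = {})
      \<and> (\<Union>l\<in>-{0}. Bt (smul l u)) = Et u)"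

end

theory Submission
  imports Defs
begin

lemma smul_smul: "smul l (smul m x) = smul (l*m) x"
  by (cases x) (auto simp: smul_def mult.assoc)

lemma smul_one: "smul 1 x = x"
  by (cases x) (auto simp: smul_def)

lemma smul_inj: "(l::'a::field) \<noteq> 0 \<Longrightarrow> inj (smul l)"
  unfolding inj_def by (auto simp: smul_def split: prod.splits)

lemma hdist_smul: "(l::'a::field) \<noteq> 0 \<Longrightarrow> hdist (smul l x) (smul l y) = hdist x y"
  by (cases x; cases y) (auto simp: smul_def hdist_def)

lemma smul_inv: "(l::'a::field) \<noteq> 0 \<Longrightarrow> smul l (smul (inverse l) y) = y"
  by (simp add: smul_smul smul_one)

lemma ball1_smul: "(l::'a::field) \<noteq> 0 \<Longrightarrow> smul l ` ball1 w = ball1 (smul l w)"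
proof -
  assume l: "l \<noteq> 0"
  show ?thesis
  proof
    show "smul l ` ball1 w \<subseteq> ball1 (smul l w)"
      using l by (auto simp: ball1_def hdist_smul)
  next
    show "ball1 (smul l w) \<subseteq> smul l ` ball1 w"
    proof
      fix y assume y: "y \<in> ball1 (smul l w)"
      have "hdist w (smul (inverse l) y) \<le> 1"
        using y l hdist_smul[OF l, of w "smul (inverse l) y"] smul_inv[OF l]
        by (simp add: ball1_def)
      then show "y \<in> smul l ` ball1 w"
        using smul_inv[OF l, of y] by (metis ball1_def image_eqI mem_Collect_eq)
    qed
  qed
qed

lemma Dq_smul1: "(l::'a::field) \<noteq> 0 \<Longrightarrow> x \<in> Dq \<Longrightarrow> smul l x \<in> Dq"
  by (cases x) (auto simp: smul_def Dq_def)

lemma Dq_smul: "(l::'a::field) \<noteq> 0 \<Longrightarrow> smul l ` (Dq::'a vec3 set) = Dq"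
proof
  assume l: "l \<noteq> 0"
  show "smul l ` Dq \<subseteq> Dq" using l Dq_smul1 by blast
  show "Dq \<subseteq> smul l ` Dq"
  proof
    fix y :: "'a vec3" assume "y \<in> Dq"
    then have "smul (inverse l) y \<in> Dq" using l by (simp add: Dq_smul1)
    then show "y \<in> smul l ` Dq" using smul_inv[OF l, of y] by (metis image_eqI)
  qed
qed

lemma Bt_smul: "(l::'a::field) \<noteq> 0 \<Longrightarrow> Bt (smul l w) = smul l ` Bt w"
  unfolding Bt_def
  by (simp add: image_Int smul_inj ball1_smul Dq_smul)

lemma part1: "(l::'a::field) \<noteq> 0 \<Longrightarrow>
   Bt (smul l u) \<inter> Bt (smul \<mu> v) = smul_set l (Bt u \<inter> Bt (smul (inverse l * \<mu>) v))"
proof -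
  assume l: "l \<noteq> 0"
  have "smul \<mu> v = smul l (smul (inverse l * \<mu>) v)"
    using l by (simp add: smul_smul mult.assoc[symmetric])
  then show ?thesis
    using l by (simp add: smul_set_def Bt_smul image_Int smul_inj)
qed

theorem lemma8:
  fixes u v :: "'a::{field, finite} vec3" and \<mu> :: 'a
  shows "(\<forall>l::'a. l \<noteq> 0 \<longrightarrow>
            Bt (smul l u) \<inter> Bt (smul \<mu> v)
              = smul_set l (Bt u \<inter> Bt (smul (inverse l * \<mu>) v)))
       \<and> (is_partition_fam u \<and> is_partition_fam v \<longrightarrow>
            card (Et u \<inter> Et v)
              = (card (UNIV::'a set) - 1) * (\<Sum>m\<in>-{0::'a}. card (Bt u \<inter> Bt (smul m v))))"
proof (intro conjI allI impI)
  fix l :: 'a assume "l \<noteq> 0"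
  then show "Bt (smul l u) \<inter> Bt (smul \<mu> v)
              = smul_set l (Bt u \<inter> Bt (smul (inverse l * \<mu>) v))" by (rule part1)
next
  assume P: "is_partition_fam u \<and> is_partition_fam v"
  define N where "N = - {0::'a}"
  define A where "A = (\<lambda>(l,l'). Bt (smul l u) \<inter> Bt (smul l' v))"
  define f where "f = (\<lambda>m. card (Bt u \<inter> Bt (smul m v)))"
  have Eu: "Et u = (\<Union>l\<in>N. Bt (smul l u))" and Ev: "Et v = (\<Union>l\<in>N. Bt (smul l v))"
    using P by (auto simp: is_partition_fam_def N_def)
  have du: "\<forall>l\<in>N. \<forall>l'\<in>N. l \<noteq> l' \<longrightarrow> Bt (smul l u) \<inter> Bt (smul l' u) = {}"
   and dv: "\<forall>l\<in>N. \<forall>l'\<in>N. l \<noteq> l' \<longrightarrow> Bt (smul l v) \<inter> Bt (smul l' v) = {}"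
    using P by (auto simp: is_partition_fam_def N_def)
  have U: "Et u \<inter> Et v = (\<Union>p\<in>N \<times> N. A p)"
    unfolding Eu Ev A_def by auto
  have disj: "\<forall>p\<in>N \<times> N. \<forall>p'\<in>N \<times> N. p \<noteq> p' \<longrightarrow> A p \<inter> A p' = {}"
  proof (intro ballI impI)
    fix p p' assume "p \<in> N \<times> N" "p' \<in> N \<times> N" "p \<noteq> p'"
    then obtain a b c d where pp: "p = (a,b)" "p' = (c,d)" "a \<in> N" "b \<in> N" "c \<in> N" "d \<in> N"
      "a \<noteq> c \<or> b \<noteq> d" by auto
    show "A p \<inter> A p' = {}"
    proof (cases "a = c")
      case True
      then have "b \<noteq> d" using pp by auto
      then show ?thesis using dv pp unfolding A_def by auto
    next
      case False
      then show ?thesis using du pp unfolding A_def by auto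
    qed
  qed
  have "card (Et u \<inter> Et v) = (\<Sum>p\<in>N \<times> N. card (A p))"
    unfolding U by (rule card_UN_disjoint) (use disj in auto)
  also have "\<dots> = (\<Sum>l\<in>N. \<Sum>l'\<in>N. card (A (l,l')))"
    by (simp add: sum.cartesian_product)
  also have "\<dots> = (\<Sum>l\<in>N. \<Sum>m\<in>N. f m)"
  proof (rule sum.cong[OF refl])
    fix l assume lN: "l \<in> N"
    then have l: "l \<noteq> 0" by (simp add: N_def)
    have "(\<Sum>l'\<in>N. card (A (l,l'))) = (\<Sum>l'\<in>N. f (inverse l * l'))"
    proof (rule sum.cong[OF refl])
      fix l' assume "l' \<in> N"
      have "A (l,l') = smul l ` (Bt u \<inter> Bt (smul (inverse l * l') v))"
        using part1[OF l, of u l' v] by (simp add: A_def smul_set_def)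
      then show "card (A (l,l')) = f (inverse l * l')"
        unfolding f_def using smul_inj[OF l]
        by (simp add: card_image inj_on_subset)
    qed
    also have "\<dots> = (\<Sum>m\<in>N. f m)"
    proof (rule sum.reindex_bij_betw)
      show "bij_betw (\<lambda>l'. inverse l * l') N N"
        unfolding bij_betw_def inj_on_def N_def
      proof (intro conjI ballI impI)
        show "(\<lambda>l'. inverse l * l') ` (- {0}) = - {0}"
        proof
          show "(\<lambda>l'. inverse l * l') ` (- {0}) \<subseteq> - {0}" using l by auto
          show "- {0} \<subseteq> (\<lambda>l'. inverse l * l') ` (- {0})"
          proof
            fix y :: 'a assume "y \<in> - {0}"
            then have "l * y \<in> - {0}" "y = inverse l * (l * y)" using l by auto
            then show "y \<in> (\<lambda>l'. inverse l * l') ` (- {0})" by blast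
          qed
        qed
      qed (use l in auto)
    qed
    finally show "(\<Sum>l'\<in>N. card (A (l,l'))) = (\<Sum>m\<in>N. f m)" .
  qed
  also have "\<dots> = card N * (\<Sum>m\<in>N. f m)" by simp
  also have "card N = card (UNIV::'a set) - 1"
    unfolding N_def by (simp add: Compl_eq_Diff_UNIV card_Diff_singleton)
  finally show "card (Et u \<inter> Et v)
              = (card (UNIV::'a set) - 1) * (\<Sum>m\<in>-{0::'a}. card (Bt u \<inter> Bt (smul m v)))"
    by (simp add: f_def N_def)
qed

end
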